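(* Let $x_0,\dots,x_n$ be terminal states with finite scalar objective values satisfying $u(x_i)\le u(x_j)$ for all $0\le i<j\le n$. Define $$I_1:=\{i: u(x_i)<u(x_{i+1}),\ 0\le i\le n-1\},\qquad I_2:=\{i: u(x_i)=u(x_{i+1}),\ 0\le i\le n-1\},$$ and $m:=|I_1|$. Introduce two auxiliary states $x_{-1},x_{n+1}$ with $u(x_{-1})=-\infty$ and $u(x_{n+1})=+\infty$. For $\gamma\ge1$ and $r:\{x_{-1},\dots,x_{n+1}\}\to[1/\gamma,1]$, define $$\mathcal{L}_{\rm OP-N}(r):=\sum_{i=0}^{n+1}\mathcal{L}_{\rm OP}(\{x_{i-1},x_i\};r),$$ and let $\widehat R$ be its minimizer over all such $r$. Let $f_1(\alpha):=\alpha^{m+2}\left(1-\frac{4}{\alpha+3}\right)^{n-m}$. The functions $\alpha\mapsto f_1(\alpha)$ and $\gamma\mapsto \gamma^{-1}f_1(\gamma^{1/(m+1)})$ are increasing on $[1,\infty)$ and tend to $+\infty$; let $\gamma_0\ge 1$ be the unique value with $f_1(\gamma_0^{1/(m+1)})=\gamma_0$, and for $\gamma>\gamma_0$ let $\alpha_\gamma>1$ be the unique solution of $f_1(\alpha_\gamma)=\gamma$, and put $\beta_\gamma:=\frac{\alpha_\gamma-1}{\alpha_\gamma+3}$. Then for every $\gamma>\gamma_0$: $$\widehat R(x_0)=\alpha_\gamma\gamma^{-1},\qquad \widehat R(x_{i+1})=\alpha_\gamma\widehat R(x_i)\ (i\in I_1),\qquad \widehat R(x_{i+1})=\beta_\gamma\widehat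 R(x_i)\ (i\in I_2).$$ Moreover, the minimal value of $\mathcal{L}_{\rm OP-N}$ is strictly decreasing in $\gamma$, so that minimizing $\mathcal{L}_{\rm OP-N}$ with $\gamma$ variable drives $\gamma\to+\infty$, and as $\gamma\to\infty$ one has $\alpha_\gamma\to+\infty$ and $\beta_\gamma\to1$.
   Context: For a pair $X=\{x,x'\}$ of states with objective $u$ and a positive function $r$, the label distribution is $\mathbb{P}_y(x\mid X)=\tfrac12\big(\mathbf{1}[u(x)>u(x')]+\mathbf{1}[u(x)\ge u(x')]\big)$ (symmetrically for $x'$), the model distribution is $\mathbb{P}(x\mid X,r)=r(x)/(r(x)+r(x'))$, and $\mathcal{L}_{\rm OP}(X;r)=\mathrm{KL}(\mathbb{P}_y(\cdot\mid X)\,\|\,\mathbb{P}(\cdot\mid X,r))$. Thus for $u(x)<u(x')$ the loss is $-\log\frac{r(x')}{r(x)+r(x')}$, and for $u(x)=u(x')$ it equals $-\tfrac12\big(\log\frac{r(x)}{r(x)+r(x')}+\log\frac{r(x')}{r(x)+r(x')}\big)-\log 2$. *)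

theory Defs
  imports Complex_Main "HOL-Library.Extended_Real"
begin

definition ind :: "bool \<Rightarrow> real" where
  "ind b = (if b then 1 else 0)"

(* label distribution P_y(x | {x,x'}) given objective values u(x)=a, u(x')=b *)
definition label_prob :: "ereal \<Rightarrow> ereal \<Rightarrow> real" where
  "label_prob a b = (ind (a > b) + ind (a \<ge> b)) / 2"

(* model distribution P(x | {x,x'}, r) given r(x)=p, r(x')=q *)
definition model_prob :: "real \<Rightarrow> real \<Rightarrow> real" where
  "model_prob p q = p / (p + q)"

definition kl2 :: "real \<Rightarrow> real \<Rightarrow> real \<Rightarrow> real \<Rightarrow> real" where
  "kl2 p p' q q' = (if p = 0 then 0 else p * ln (p / q)) + (if p' = 0 then 0 else p' * ln (p' / q'))"

(* L_OP({x,x'}; r) with u(x)=a, u(x')=b, r(x)=p, r(x')=q *)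
definition L_OP :: "ereal \<Rightarrow> ereal \<Rightarrow> real \<Rightarrow> real \<Rightarrow> real" where
  "L_OP a b p q = kl2 (label_prob a b) (label_prob b a) (model_prob p q) (model_prob q p)"

(* states are indexed by -1..n+1; u(x_{-1}) = -\<infinity>, u(x_{n+1}) = +\<infinity> *)
definition Uext :: "nat \<Rightarrow> (nat \<Rightarrow> real) \<Rightarrow> int \<Rightarrow> ereal" where
  "Uext n u i = (if i < 0 then -\<infinity> else if i > int n then \<infinity> else ereal (u (nat i)))"

definition I1 :: "nat \<Rightarrow> (nat \<Rightarrow> real) \<Rightarrow> nat set" where
  "I1 n u = {i. i < n \<and> u i < u (Suc i)}"

definition I2 :: "nat \<Rightarrow> (nat \<Rightarrow> real) \<Rightarrow> nat set" where
  "I2 n u = {i. i < n \<and> u i = u (Suc i)}"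

definition L_OPN :: "nat \<Rightarrow> (nat \<Rightarrow> real) \<Rightarrow> (int \<Rightarrow> real) \<Rightarrow> real" where
  "L_OPN n u r = (\<Sum>i\<in>{0..int n + 1}. L_OP (Uext n u (i - 1)) (Uext n u i) (r (i - 1)) (r i))"

definition admissible :: "real \<Rightarrow> nat \<Rightarrow> (int \<Rightarrow> real) \<Rightarrow> bool" where
  "admissible \<gamma> n r = (\<forall>i\<in>{-1..int n + 1}. r i \<in> {1/\<gamma>..1})"

definition is_minimizer :: "real \<Rightarrow> nat \<Rightarrow> (nat \<Rightarrow> real) \<Rightarrow> (int \<Rightarrow> real) \<Rightarrow> bool" where
  "is_minimizer \<gamma> n u r = (admissible \<gamma> n r \<and> (\<forall>r'. admissible \<gamma> n r' \<longrightarrow> L_OPN n u r \<le> L_OPN n u r'))"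

definition Lmin :: "real \<Rightarrow> nat \<Rightarrow> (nat \<Rightarrow> real) \<Rightarrow> real" where
  "Lmin \<gamma> n u = Inf (L_OPN n u ` {r. admissible \<gamma> n r})"

definition f1 :: "nat \<Rightarrow> nat \<Rightarrow> real \<Rightarrow> real" where
  "f1 n m \<alpha> = \<alpha> ^ (m + 2) * (1 - 4 / (\<alpha> + 3)) ^ (n - m)"

definition alpha_gamma :: "nat \<Rightarrow> nat \<Rightarrow> real \<Rightarrow> real" where
  "alpha_gamma n m \<gamma> = (THE \<alpha>. \<alpha> > 1 \<and> f1 n m \<alpha> = \<gamma>)"

definition beta_of :: "real \<Rightarrow> real" where
  "beta_of \<alpha> = (\<alpha> - 1) / (\<alpha> + 3)"

end

theory Submission
  imports Defs
begin


lemma K_core: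
  fixes a t :: real
  assumes a: "a > 0" and t: "t > 0"
  shows "ln (1 + t) - ln (1 + a) - (a / (1 + a)) * (ln t - ln a) \<ge> 0"
    and "ln (1 + t) - ln (1 + a) - (a / (1 + a)) * (ln t - ln a) = 0 \<Longrightarrow> t = a"
proof -
  define w where "w = a / (1 + a)"
  define \<phi> where "\<phi> x = ln (1 + x) - w * ln x" for x :: real
  have der: "DERIV \<phi> x :> (1 / (1 + x) - w / x)" if "x > 0" for x
    unfolding \<phi>_def using that
    by (auto intro!: derivative_eq_intros simp: field_simps)
  have dsign: "1 / (1 + x) - w / x = (x - a) / ((1 + a) * x * (1 + x))" if "x > 0" for x
  proof -
    have "1 + a \<noteq> 0" "1 + x \<noteq> 0" "x \<noteq> 0" using a that by auto
    then show ?thesis unfolding w_def by (simp add: divide_simps) (simp add: algebra_simps)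
  qed
  have cont: "continuous_on {p..q} \<phi>" if "p > 0" for p q
    unfolding \<phi>_def using that by (intro continuous_intros) auto
  have lt: "\<phi> a < \<phi> x" if "x > 0" "x \<noteq> a" for x
  proof (cases "x < a")
    case True
    show ?thesis
    proof (rule DERIV_neg_imp_decreasing_open[OF True _ cont[OF \<open>x > 0\<close>]])
      fix y assume "x < y" "y < a"
      then have "y > 0" "y - a < 0" using \<open>x > 0\<close> by auto
      moreover have "(1 + a) * y * (1 + y) > 0" using \<open>y > 0\<close> a by simp
      ultimately show "\<exists>d. DERIV \<phi> y :> d \<and> d < 0"
        using der dsign divide_neg_pos by metis
    qed
  next
    case False
    then have "a < x" using that by auto
    show ?thesis
    proof (rule DERIV_pos_imp_increasing_open[OF \<open>a < x\<close> _ cont[OF a]])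
      fix y assume "a < y" "y < x"
      then have "y > 0" "y - a > 0" using a by auto
      moreover have "(1 + a) * y * (1 + y) > 0" using \<open>y > 0\<close> a by simp
      ultimately show "\<exists>d. DERIV \<phi> y :> d \<and> d > 0"
        using der dsign divide_pos_pos by metis
    qed
  qed
  have eq: "ln (1 + t) - ln (1 + a) - (a / (1 + a)) * (ln t - ln a) = \<phi> t - \<phi> a"
    unfolding \<phi>_def w_def by (simp add: right_diff_distrib)
  show "ln (1 + t) - ln (1 + a) - (a / (1 + a)) * (ln t - ln a) \<ge> 0"
    using lt[OF t] eq by (cases "t = a") auto
  show "ln (1 + t) - ln (1 + a) - (a / (1 + a)) * (ln t - ln a) = 0 \<Longrightarrow> t = a"
    using lt[OF t] eq by fastforce
qed

lemma L_OP_strict: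
  assumes "a < b" "p > 0" "q > 0"
  shows "L_OP a b p q = ln (p + q) - ln q"
proof -
  have "label_prob a b = 0" "label_prob b a = 1"
    using assms(1) by (auto simp: label_prob_def ind_def)
  moreover have "ln (1 / (q / (p + q))) = ln (p + q) - ln q"
    using assms by (simp add: ln_div)
  moreover have "ln ((q + p) / q) = ln (p + q) - ln q"
    using assms by (simp add: ln_div add.commute)
  ultimately show ?thesis by (simp add: L_OP_def kl2_def model_prob_def)
qed

lemma L_OP_eq:
  assumes "p > 0" "q > 0"
  shows "L_OP a a p q = ln (p + q) - ln 2 - (ln p + ln q) / 2"
proof -
  have lp: "label_prob a a = 1/2"
    by (auto simp: label_prob_def ind_def)
  have f1: "ln ((1/2) / (p / (p + q))) = ln (p + q) - ln 2 - ln p"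
    using assms by (simp add: ln_div ln_mult)
  have f2: "ln ((1/2) / (q / (p + q))) = ln (p + q) - ln 2 - ln q"
    using assms by (simp add: ln_div ln_mult)
  have kl: "kl2 (1/2) (1/2) x y = 1/2 * ln ((1/2) / x) + 1/2 * ln ((1/2) / y)" for x y
    by (simp add: kl2_def)
  have "L_OP a a p q = kl2 (1/2) (1/2) (p/(p+q)) (q/(p+q))"
    by (simp only: L_OP_def model_prob_def lp add.commute[of q p])
  also have "\<dots> = 1/2 * ln ((1/2) / (p / (p + q))) + 1/2 * ln ((1/2) / (q / (p + q)))"
    by (rule kl)
  also have "\<dots> = 1/2 * (ln (p + q) - ln 2 - ln p) + 1/2 * (ln (p + q) - ln 2 - ln q)"
    by (simp only: f1 f2)
  finally show ?thesis by (simp add: algebra_simps add_divide_distrib)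
qed

lemma ln_split:
  fixes p t :: real assumes "p > 0" "t > 0"
  shows "ln (p + p * t) = ln p + ln (1 + t)" "ln (p * t) = ln p + ln t"
proof -
  have "p + p * t = p * (1 + t)" by (simp add: algebra_simps)
  then show "ln (p + p * t) = ln p + ln (1 + t)" using assms by (simp add: ln_mult)
  show "ln (p * t) = ln p + ln t" using assms by (simp add: ln_mult)
qed

lemma strict_tangent:
  fixes a p q p' :: real
  assumes a: "a > 0" and p: "p > 0" and q: "q > 0" and p': "p' > 0"
  defines "D \<equiv> (ln (p + q) - ln q) - (ln (p' + a * p') - ln (a * p'))
     + (1 - a / (1 + a)) * ((ln q - ln p) - ln a)"
  shows "D \<ge> 0" and "D = 0 \<Longrightarrow> q = a * p"
proof -
  define t where "t = q / p"
  have t: "t > 0" and qt: "q = p * t" using p q by (auto simp: t_def)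
  have "D = ln (1 + t) - ln (1 + a) - (a / (1 + a)) * (ln t - ln a)"
  proof -
    have e1: "ln (p + q) = ln p + ln (1 + t)" "ln q = ln p + ln t"
      using ln_split[OF p t] qt by auto
    have e2: "ln (p' + a * p') = ln p' + ln (1 + a)" "ln (a * p') = ln p' + ln a"
      using ln_split[OF p' a] by (auto simp: mult.commute)
    have e3: "1 - a / (1 + a) = 1 / (1 + a)" using a by (simp add: field_simps)
    have e4: "a / (1 + a) = 1 - 1 / (1 + a)" using a by (simp add: field_simps)
    show ?thesis unfolding D_def e1 e2 e3 e4 by (simp add: right_diff_distrib left_diff_distrib)
  qed
  then show "D \<ge> 0" "D = 0 \<Longrightarrow> q = a * p" using K_core[OF a t] qt by auto
qed

lemma eq_tangent:
  fixes b p q p' :: real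
  assumes b: "b > 0" and p: "p > 0" and q: "q > 0" and p': "p' > 0"
  defines "D \<equiv> (ln (p + q) - ln 2 - (ln p + ln q) / 2) - (ln (p' + b * p') - ln 2 - (ln p' + ln (b * p')) / 2)
     + (1/2 - b / (1 + b)) * ((ln q - ln p) - ln b)"
  shows "D \<ge> 0" and "D = 0 \<Longrightarrow> q = b * p"
proof -
  define t where "t = q / p"
  have t: "t > 0" and qt: "q = p * t" using p q by (auto simp: t_def)
  have "D = ln (1 + t) - ln (1 + b) - (b / (1 + b)) * (ln t - ln b)"
  proof -
    have e1: "ln (p + q) = ln p + ln (1 + t)" "ln q = ln p + ln t"
      using ln_split[OF p t] qt by auto
    have e2: "ln (p' + b * p') = ln p' + ln (1 + b)" "ln (b * p') = ln p' + ln b"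
      using ln_split[OF p' b] by (auto simp: mult.commute)
    show ?thesis unfolding D_def e1 e2 by (simp add: right_diff_distrib left_diff_distrib diff_divide_distrib add_divide_distrib)
  qed
  then show "D \<ge> 0" "D = 0 \<Longrightarrow> q = b * p" using K_core[OF b t] qt by auto
qed



definition bet :: "real \<Rightarrow> real" where "bet a = 1 - 4 / (a + 3)"
definition hh :: "nat \<Rightarrow> real \<Rightarrow> real" where "hh k a = a * bet a ^ k"

lemma bet_props:
  assumes "a \<ge> 1"
  shows "bet a \<ge> 0" "bet a < 1" "a > 1 \<Longrightarrow> bet a > 0" "bet a = (a - 1) / (a + 3)"
  using assms by (auto simp: bet_def field_simps)

lemma bet_mono:
  assumes "1 \<le> a" "a < b" shows "bet a < bet b"
  using assms by (auto simp: bet_def field_simps)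

lemma f1_eq: "f1 n m a = a ^ (m + 2) * bet a ^ (n - m)"
  by (simp add: f1_def bet_def)

lemma f1_hh: "f1 n m a = a ^ (m + 1) * hh (n - m) a"
  by (simp add: f1_eq hh_def)

lemma pow_bet_mono:
  assumes "1 \<le> a" "a \<le> b" shows "bet a ^ k \<le> bet b ^ k"
  using assms bet_mono[of a b] bet_props[of a]
  by (cases "a = b") (auto intro!: power_mono)

lemma f1_strict_mono: "strict_mono_on {1..} (f1 n m)"
proof (rule strict_mono_onI)
  fix a b :: real assume ab: "a \<in> {1..}" "b \<in> {1..}" "a < b"
  then have b1: "b > 1" by auto
  have "f1 n m a \<le> a ^ (m + 2) * bet b ^ (n - m)"
    unfolding f1_eq using ab by (intro mult_left_mono pow_bet_mono) auto
  also have "\<dots> < b ^ (m + 2) * bet b ^ (n - m)"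
    using ab bet_props(3)[OF _ b1] by (intro mult_strict_right_mono power_strict_mono) auto
  finally show "f1 n m a < f1 n m b" by (simp add: f1_eq)
qed

lemma hh_strict_mono: "strict_mono_on {1..} (hh k)"
proof (rule strict_mono_onI)
  fix a b :: real assume ab: "a \<in> {1..}" "b \<in> {1..}" "a < b"
  then have b1: "b > 1" by auto
  have "hh k a \<le> a * bet b ^ k"
    unfolding hh_def using ab by (intro mult_left_mono pow_bet_mono) auto
  also have "\<dots> < b * bet b ^ k"
    using ab bet_props(3)[OF _ b1] by (intro mult_strict_right_mono) auto
  finally show "hh k a < hh k b" by (simp add: hh_def)
qed

lemma f1_le: "a \<ge> 1 \<Longrightarrow> f1 n m a \<le> a ^ (m + 2)"
  unfolding f1_eq using bet_props[of a]
  by (intro mult_left_le) (auto intro!: power_le_one)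

lemma f1_nonneg: "a \<ge> 1 \<Longrightarrow> f1 n m a \<ge> 0"
  unfolding f1_eq using bet_props[of a] by auto

lemma f1_one: "f1 n m 1 \<le> 1"
  using f1_le[of 1] by simp

lemma hh_one: "hh k 1 \<le> 1"
  unfolding hh_def using bet_props[of 1] by (auto intro!: power_le_one)

lemma f1_cont: "continuous_on {1..b} (f1 n m)"
  unfolding f1_def by (intro continuous_intros) auto

lemma hh_cont: "continuous_on {1..b} (hh k)"
  unfolding hh_def bet_def by (intro continuous_intros) auto

lemma hh_at_top: "filterlim (hh k) at_top at_top"
proof -
  have "filterlim (\<lambda>a::real. (1/2::real)^k * a) at_top at_top"
    by (rule filterlim_tendsto_pos_mult_at_top[OF tendsto_const]) (auto simp: filterlim_ident)
  moreover have "eventually (\<lambda>a. (1/2)^k * a \<le> hh k a) at_top"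
    unfolding eventually_at_top_linorder
  proof (intro exI[of _ 5] allI impI)
    fix a :: real assume "a \<ge> 5"
    then have "bet a \<ge> 1/2" by (simp add: bet_def field_simps)
    then have "(1/2)^k \<le> bet a ^ k" by (intro power_mono) auto
    then show "(1/2)^k * a \<le> hh k a" unfolding hh_def using \<open>a \<ge> 5\<close>
      by (simp add: mult.commute mult_left_mono)
  qed
  ultimately show ?thesis by (rule filterlim_at_top_mono)
qed

lemma f1_ge_hh: "a \<ge> 1 \<Longrightarrow> hh (n - m) a \<le> f1 n m a"
proof -
  assume a: "a \<ge> 1"
  have "hh (n - m) a \<ge> 0" unfolding hh_def using bet_props[OF a] a by auto
  moreover have "a ^ (m + 1) \<ge> 1" using a by (rule one_le_power)
  ultimately show ?thesis unfolding f1_hh using mult_right_mono[of 1 "a^(m+1)" "hh (n - m) a"] by simp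
qed

lemma f1_at_top: "filterlim (f1 n m) at_top at_top"
  by (rule filterlim_at_top_mono[OF hh_at_top])
     (auto simp: eventually_at_top_linorder intro!: exI[of _ 1] f1_ge_hh)



lemma powr_inv_pow:
  assumes "\<gamma> > 0" shows "(\<gamma> powr (1 / real (m + 1))) ^ (m + 1) = \<gamma>"
proof -
  have pos: "\<gamma> powr (1 / real (m + 1)) > 0" using assms by simp
  have "(\<gamma> powr (1 / real (m + 1))) ^ (m + 1) = (\<gamma> powr (1 / real (m + 1))) powr real (m + 1)"
    by (rule powr_realpow[symmetric, OF pos])
  also have "\<dots> = \<gamma> powr (1 / real (m + 1) * real (m + 1))" by (rule powr_powr)
  also have "\<dots> = \<gamma>" using assms by simp
  finally show ?thesis .
qed

lemma pow_inv_powr: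
  assumes "Z > 0" shows "(Z ^ (m + 1)) powr (1 / real (m + 1)) = Z"
proof -
  have "(Z ^ (m + 1)) powr (1 / real (m + 1)) = (Z powr real (m + 1)) powr (1 / real (m + 1))"
    by (simp only: powr_realpow[OF assms])
  also have "\<dots> = Z powr (real (m + 1) * (1 / real (m + 1)))" by (rule powr_powr)
  also have "\<dots> = Z" using assms by simp
  finally show ?thesis .
qed

lemma G_eq:
  assumes "\<gamma> > 0"
  shows "f1 n m (\<gamma> powr (1 / real (m + 1))) / \<gamma> = hh (n - m) (\<gamma> powr (1 / real (m + 1)))"
  unfolding f1_hh powr_inv_pow[OF assms] using assms by simp

lemma powr_ge1: "\<gamma> \<ge> 1 \<Longrightarrow> \<gamma> powr (1 / real (m + 1)) \<ge> 1"
  by (simp add: ge_one_powr_ge_zero)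

lemma powr_at_top: "filterlim (\<lambda>\<gamma>::real. \<gamma> powr (1 / real (m + 1))) at_top at_top"
  unfolding filterlim_at_top eventually_at_top_linorder
proof (intro allI)
  fix Z :: real
  show "\<exists>N. \<forall>x\<ge>N. Z \<le> x powr (1 / real (m + 1))"
  proof (intro exI[of _ "max 1 (\<bar>Z\<bar> ^ (m + 1))"] allI impI)
    fix x assume x: "max 1 (\<bar>Z\<bar> ^ (m + 1)) \<le> x"
    show "Z \<le> x powr (1 / real (m + 1))"
    proof (cases "Z \<le> 0")
      case True then show ?thesis by (meson order.trans powr_ge_zero)
    next
      case False
      then have "Z = (Z ^ (m + 1)) powr (1 / real (m + 1))"
        using pow_inv_powr[of Z m] by simp
      also have "\<dots> \<le> x powr (1 / real (m + 1))"
        using x False by (intro powr_mono2) auto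
      finally show ?thesis .
    qed
  qed
qed

lemma G_strict_mono: "strict_mono_on {1..} (\<lambda>\<gamma>. f1 n m (\<gamma> powr (1 / real (m + 1))) / \<gamma>)"
proof (rule strict_mono_onI)
  fix x y :: real assume xy: "x \<in> {1..}" "y \<in> {1..}" "x < y"
  have "x powr (1 / real (m + 1)) < y powr (1 / real (m + 1))"
    using xy by (intro powr_less_mono2) auto
  then have "hh (n - m) (x powr (1 / real (m + 1))) < hh (n - m) (y powr (1 / real (m + 1)))"
    using hh_strict_mono[of "n - m"] powr_ge1[of x m] powr_ge1[of y m] xy
    by (auto simp: strict_mono_on_def)
  then show "f1 n m (x powr (1 / real (m + 1))) / x < f1 n m (y powr (1 / real (m + 1))) / y"
    using G_eq[of x n m] G_eq[of y n m] xy by auto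
qed

lemma G_at_top: "filterlim (\<lambda>\<gamma>. f1 n m (\<gamma> powr (1 / real (m + 1))) / \<gamma>) at_top at_top"
proof -
  have "filterlim (\<lambda>\<gamma>. hh (n - m) (\<gamma> powr (1 / real (m + 1)))) at_top at_top"
    by (rule filterlim_compose[OF hh_at_top powr_at_top])
  moreover have "eventually (\<lambda>\<gamma>. hh (n - m) (\<gamma> powr (1 / real (m + 1))) \<le> f1 n m (\<gamma> powr (1 / real (m + 1))) / \<gamma>) at_top"
    using G_eq[of _ n m] by (auto simp: eventually_at_top_linorder intro!: exI[of _ 1])
  ultimately show ?thesis by (rule filterlim_at_top_mono)
qed

lemma gamma0_exists: "\<exists>!\<gamma>0. \<gamma>0 \<ge> 1 \<and> f1 n m (\<gamma>0 powr (1 / real (m + 1))) = \<gamma>0"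
proof -
  define e where "e = 1 / real (m + 1)"
  have eqv: "f1 n m (g powr e) = g \<longleftrightarrow> hh (n - m) (g powr e) = 1" if "g \<ge> 1" for g
    using G_eq[of g n m] that unfolding e_def by (auto simp: field_simps)
  obtain B where B: "B \<ge> 1" "hh (n - m) B \<ge> 1"
    using hh_at_top[of "n - m"] unfolding filterlim_at_top eventually_at_top_linorder
    by (metis max.cobounded1 max.cobounded2)
  obtain a where a: "1 \<le> a" "a \<le> B" "hh (n - m) a = 1"
    using IVT'[of "hh (n - m)" 1 1 B, OF hh_one B(2) B(1) hh_cont] by auto
  define g where "g = a ^ (m + 1)"
  have g1: "g \<ge> 1" unfolding g_def using a(1) by (rule one_le_power)
  have "g powr e = a" unfolding g_def e_def using a pow_inv_powr[of a m] by simp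
  then have ex: "g \<ge> 1 \<and> f1 n m (g powr e) = g" using eqv[OF g1] a g1 by simp
  show ?thesis
  proof (rule ex1I[of _ g])
    show "g \<ge> 1 \<and> f1 n m (g powr (1 / real (m + 1))) = g" using ex by (simp add: e_def)
    fix y assume y: "y \<ge> 1 \<and> f1 n m (y powr (1 / real (m + 1))) = y"
    show "y = g"
    proof (rule ccontr)
      assume "y \<noteq> g"
      then have "y < g \<or> g < y" by auto
      moreover have "f1 n m (y powr e) / y = 1" "f1 n m (g powr e) / g = 1"
        using y ex g1 unfolding e_def by auto
      ultimately show False using strict_mono_onD[OF G_strict_mono[of n m]] y g1 unfolding e_def
        by (metis atLeast_iff less_irrefl)
    qed
  qed
qed

lemma alpha_exists:
  assumes "\<gamma> > 1"
  shows "\<exists>!\<alpha>. \<alpha> > 1 \<and> f1 n m \<alpha> = \<gamma>"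
proof -
  obtain B where B: "B \<ge> 1" "f1 n m B \<ge> \<gamma>"
    using f1_at_top[of n m] unfolding filterlim_at_top eventually_at_top_linorder
    by (metis max.cobounded1 max.cobounded2)
  obtain a where a: "1 \<le> a" "a \<le> B" "f1 n m a = \<gamma>"
    using IVT'[of "f1 n m" 1 \<gamma> B, OF _ B(2) B(1) f1_cont] f1_one[of n m] assms by auto
  have "a \<noteq> 1" using a f1_one[of n m] assms by auto
  then have a1: "a > 1" using a by auto
  show ?thesis
  proof (rule ex1I[of _ a])
    show "a > 1 \<and> f1 n m a = \<gamma>" using a1 a by auto
    fix y assume "y > 1 \<and> f1 n m y = \<gamma>"
    then show "y = a" using a a1 f1_strict_mono[of n m]
      by (metis atLeast_iff less_imp_le linorder_neqE_linordered_idom order_less_irrefl strict_mono_onD)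
  qed
qed

lemma alpha_gamma_props:
  assumes "\<gamma> > 1"
  shows "alpha_gamma n m \<gamma> > 1" "f1 n m (alpha_gamma n m \<gamma>) = \<gamma>"
  using theI'[OF alpha_exists[OF assms, of n m]] unfolding alpha_gamma_def by auto

lemma alpha_at_top: "filterlim (alpha_gamma n m) at_top at_top"
  unfolding filterlim_at_top eventually_at_top_linorder
proof (intro allI)
  fix Z :: real
  show "\<exists>N. \<forall>x\<ge>N. Z \<le> alpha_gamma n m x"
  proof (intro exI[of _ "max 2 (\<bar>Z\<bar> ^ (m + 2))"] allI impI)
    fix x assume x: "max 2 (\<bar>Z\<bar> ^ (m + 2)) \<le> x"
    then have x1: "x > 1" by auto
    note al = alpha_gamma_props[OF x1, of n m]
    show "Z \<le> alpha_gamma n m x"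
    proof (rule ccontr)
      assume "\<not> Z \<le> alpha_gamma n m x"
      then have "alpha_gamma n m x ^ (m + 2) < Z ^ (m + 2)"
        using al by (intro power_strict_mono) auto
      moreover have "x \<le> alpha_gamma n m x ^ (m + 2)"
        using f1_le[of "alpha_gamma n m x" n m] al by auto
      moreover have "Z ^ (m + 2) \<le> x" using x \<open>\<not> Z \<le> _\<close> al by auto
      ultimately show False by auto
    qed
  qed
qed

lemma beta_lim: "((\<lambda>\<gamma>. beta_of (alpha_gamma n m \<gamma>)) \<longlongrightarrow> 1) at_top"
proof -
  have "((\<lambda>a::real. 1 - 4 / (a + 3)) \<longlongrightarrow> 1 - 0) at_top"
    by (intro tendsto_intros tendsto_divide_0[OF tendsto_const] filterlim_at_top_imp_at_infinity
        filterlim_tendsto_add_at_top[OF tendsto_const filterlim_ident, of 3, THEN filterlim_cong[THEN iffD1, rotated -1]]) (auto simp: add.commute)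
  then have lim: "(bet \<longlongrightarrow> 1) at_top" unfolding bet_def by simp
  have "((\<lambda>\<gamma>. bet (alpha_gamma n m \<gamma>)) \<longlongrightarrow> 1) at_top"
    by (rule filterlim_compose[OF lim alpha_at_top])
  moreover have "eventually (\<lambda>\<gamma>. bet (alpha_gamma n m \<gamma>) = beta_of (alpha_gamma n m \<gamma>)) at_top"
    unfolding eventually_at_top_linorder
  proof (intro exI[of _ 2] allI impI)
    fix x :: real assume "x \<ge> 2"
    then have "alpha_gamma n m x > 1" by (intro alpha_gamma_props) simp
    then show "bet (alpha_gamma n m x) = beta_of (alpha_gamma n m x)"
      by (simp add: beta_of_def bet_props(4))
  qed
  ultimately show ?thesis by (rule tendsto_cong[THEN iffD1, rotated -1])
qed



lemma key_ineq:
  assumes g0: "\<gamma>0 \<ge> 1" "f1 n m (\<gamma>0 powr (1 / real (m + 1))) = \<gamma>0" and g: "\<gamma>0 < \<gamma>"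
  shows "hh (n - m) (alpha_gamma n m \<gamma>) > 1"
proof -
  define e where "e = 1 / real (m + 1)"
  define \<alpha> where "\<alpha> = alpha_gamma n m \<gamma>"
  have g1: "\<gamma> > 1" using g g0 by auto
  have a1: "\<alpha> > 1" and fa: "f1 n m \<alpha> = \<gamma>" using alpha_gamma_props[OF g1] unfolding \<alpha>_def by auto
  have "(\<lambda>\<gamma>. f1 n m (\<gamma> powr (1 / real (m + 1))) / \<gamma>) \<gamma>0 < (\<lambda>\<gamma>. f1 n m (\<gamma> powr (1 / real (m + 1))) / \<gamma>) \<gamma>"
    by (rule strict_mono_onD[OF G_strict_mono]) (use g0 g in auto)
  then have "1 < f1 n m (\<gamma> powr e) / \<gamma>" using g0 unfolding e_def by simp
  then have "f1 n m (\<gamma> powr e) > \<gamma>" using g1 by (simp add: field_simps)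
  have ae: "\<alpha> < \<gamma> powr e"
  proof (rule ccontr)
    assume "\<not> \<alpha> < \<gamma> powr e"
    then have "\<gamma> powr e \<le> \<alpha>" by auto
    moreover have "\<gamma> powr e \<ge> 1" unfolding e_def using g1 by (intro powr_ge1) auto
    ultimately have "f1 n m (\<gamma> powr e) \<le> f1 n m \<alpha>"
      using strict_mono_onD[OF f1_strict_mono[of n m], of "\<gamma> powr e" \<alpha>] by (cases "\<gamma> powr e = \<alpha>") auto
    then show False using \<open>f1 n m (\<gamma> powr e) > \<gamma>\<close> fa by auto
  qed
  have "\<alpha> ^ (m + 1) < (\<gamma> powr e) ^ (m + 1)"
    using ae a1 by (intro power_strict_mono) auto
  also have "\<dots> = \<gamma>" unfolding e_def using g1 by (intro powr_inv_pow) auto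
  finally have lt: "\<alpha> ^ (m + 1) < \<gamma>" .
  show ?thesis
  proof (rule ccontr)
    assume "\<not> ?thesis"
    then have "hh (n - m) \<alpha> \<le> 1" unfolding \<alpha>_def by auto
    moreover have "\<alpha> ^ (m + 1) > 0" using a1 by auto
    ultimately have "\<alpha> ^ (m + 1) * hh (n - m) \<alpha> \<le> \<alpha> ^ (m + 1)"
      by (simp add: mult_left_le)
    then show False using lt fa unfolding f1_hh by auto
  qed
qed

lemma nat_1_plus[simp]: "nat (1 + int i) = Suc i" by arith

lemma Uext_nat: "i \<le> n \<Longrightarrow> Uext n u (int i) = ereal (u i)"
  by (simp add: Uext_def)
lemma Uext_top: "Uext n u (int n + 1) = \<infinity>"
  by (simp add: Uext_def)
lemma Uext_bot: "Uext n u (-1) = -\<infinity>"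
  by (simp add: Uext_def)

definition Tm :: "nat set \<Rightarrow> nat \<Rightarrow> real \<Rightarrow> real \<Rightarrow> real" where
  "Tm E j p q = (if j \<in> E then ln (p + q) - ln 2 - (ln p + ln q) / 2 else ln (p + q) - ln q)"

locale setting =
  fixes n :: nat and u :: "nat \<Rightarrow> real"
  assumes mono_u: "\<And>i j. i < j \<Longrightarrow> j \<le> n \<Longrightarrow> u i \<le> u j"
begin

abbreviation "E \<equiv> Suc ` I2 n u"

lemma I12_disj: "I1 n u \<inter> I2 n u = {}"
  by (auto simp: I1_def I2_def)

lemma I12_union: "I1 n u \<union> I2 n u = {..<n}"
proof -
  have "u i < u (Suc i) \<or> u i = u (Suc i)" if "i < n" for i
    using mono_u[of i "Suc i"] that by auto
  then show ?thesis by (auto simp: I1_def I2_def)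
qed

lemma card_I2: "card (I2 n u) = n - card (I1 n u)" and m_le: "card (I1 n u) \<le> n"
proof -
  have fin: "finite (I1 n u)" "finite (I2 n u)" by (auto simp: I1_def I2_def)
  have "card (I1 n u) + card (I2 n u) = n"
    using card_Un_disjoint[OF fin I12_disj] I12_union by simp
  then show "card (I2 n u) = n - card (I1 n u)" "card (I1 n u) \<le> n" by auto
qed

lemma E_sub: "E \<subseteq> {1..n}"
  by (auto simp: I2_def)

lemma card_E: "card E = n - card (I1 n u)"
  using card_I2 by (simp add: card_image)

lemma term_eq:
  assumes j: "j \<le> n + 1" and p: "p > 0" and q: "q > 0"
  shows "L_OP (Uext n u (int j - 1)) (Uext n u (int j)) p q = Tm E j p q"
proof (cases "j \<in> E")
  case True
  then obtain i where i: "j = Suc i" "i \<in> I2 n u" by auto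
  then have "i < n" "u i = u (Suc i)" by (auto simp: I2_def)
  moreover have "nat (1 + int i) = Suc i" by arith
  ultimately have "Uext n u (int j - 1) = Uext n u (int j)"
    using i by (simp add: Uext_def)
  then show ?thesis using True L_OP_eq[OF p q] by (simp add: Tm_def)
next
  case False
  have "Uext n u (int j - 1) < Uext n u (int j)"
  proof (cases "j = 0")
    case True then show ?thesis by (simp add: Uext_def)
  next
    case j0: False
    then obtain i where i: "j = Suc i" by (cases j) auto
    show ?thesis
    proof (cases "j = n + 1")
      case True
      then show ?thesis using i by (simp add: Uext_def)
    next
      case False
      then have "i < n" using i j by auto
      moreover have "i \<notin> I2 n u" using \<open>j \<notin> E\<close> i by auto
      ultimately have "u i < u (Suc i)" using mono_u[of i "Suc i"] by (auto simp: I2_def)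
      then show ?thesis using i \<open>i < n\<close> by (simp add: Uext_def)
    qed
  qed
  then show ?thesis using False L_OP_strict[OF _ p q] by (simp add: Tm_def)
qed

lemma L_OPN_eq:
  assumes pos: "\<And>i. i \<in> {-1..int n + 1} \<Longrightarrow> r i > 0"
  shows "L_OPN n u r = (\<Sum>j\<in>{0..n+1}. Tm E j (r (int j - 1)) (r (int j)))"
proof -
  have "{0..int n + 1} = int ` {0..n+1}" by (simp add: image_int_atLeastAtMost)
  then have "L_OPN n u r = (\<Sum>j\<in>{0..n+1}. L_OP (Uext n u (int j - 1)) (Uext n u (int j)) (r (int j - 1)) (r (int j)))"
    unfolding L_OPN_def by (simp add: sum.reindex)
  also have "\<dots> = (\<Sum>j\<in>{0..n+1}. Tm E j (r (int j - 1)) (r (int j)))"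
    by (intro sum.cong refl term_eq) (auto intro!: pos)
  finally show ?thesis .
qed

lemma telescope:
  fixes g :: "int \<Rightarrow> real"
  shows "(\<Sum>j\<in>{0..n+1}. g (int j) - g (int j - 1)) = g (int n + 1) - g (-1)"
proof -
  have "(\<Sum>j\<in>{0..n+1}. g (int j) - g (int j - 1)) = (\<Sum>j = 0..n+1. (\<lambda>k. g (int k - 1)) (Suc j) - (\<lambda>k. g (int k - 1)) j)"
    by (intro sum.cong) auto
  also have "\<dots> = (\<lambda>k. g (int k - 1)) (Suc (n + 1)) - (\<lambda>k. g (int k - 1)) 0"
    using sum_Suc_diff[of 0 "n+1" "\<lambda>k. g (int k - 1)"] by simp
  also have "\<dots> = g (int n + 1) - g (-1)" by (simp add: add.commute)
  finally show ?thesis .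
qed

end



lemma sum_lin:
  fixes a b c d :: "nat \<Rightarrow> real"
  shows "(\<Sum>j\<in>A. (a j - b j) + l * (c j - d j)) = (sum a A - sum b A) + l * (sum c A - sum d A)"
  by (simp add: sum.distrib sum_subtractf right_diff_distrib sum_distrib_left)

context setting begin

lemma opt:
  assumes g0: "\<gamma>0 \<ge> 1" "f1 n (card (I1 n u)) (\<gamma>0 powr (1 / real (card (I1 n u) + 1))) = \<gamma>0"
    and g: "\<gamma>0 < \<gamma>"
  shows "\<exists>r. is_minimizer \<gamma> n u r \<and> r (-1) = 1 / \<gamma>"
    and "is_minimizer \<gamma> n u r \<Longrightarrow> r (-1) = 1 / \<gamma>
          \<and> r 0 = alpha_gamma n (card (I1 n u)) \<gamma> / \<gamma>
          \<and> (\<forall>i\<in>I1 n u. r (int i + 1) = alpha_gamma n (card (I1 n u)) \<gamma> * r (int i))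
          \<and> (\<forall>i\<in>I2 n u. r (int i + 1) = beta_of (alpha_gamma n (card (I1 n u)) \<gamma>) * r (int i))"
proof -
  define m where "m = card (I1 n u)"
  define \<alpha> where "\<alpha> = alpha_gamma n m \<gamma>"
  define \<beta> where "\<beta> = beta_of \<alpha>"
  have g1: "\<gamma> > 1" using g g0 by auto
  have a1: "\<alpha> > 1" and fa: "f1 n m \<alpha> = \<gamma>" using alpha_gamma_props[OF g1] unfolding \<alpha>_def by auto
  have hk: "hh (n - m) \<alpha> > 1" unfolding \<alpha>_def m_def by (rule key_ineq[OF g0 g])
  have bet_eq: "bet \<alpha> = \<beta>" using a1 bet_props(4)[of \<alpha>] by (simp add: \<beta>_def beta_of_def)
  have b0: "\<beta> > 0" and b1: "\<beta> \<le> 1" using bet_props[of \<alpha>] a1 bet_eq by auto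
  have cE: "card E = n - m" using card_E m_def by simp
  have mn: "m \<le> n" using m_le m_def by simp
  define \<rho> where "\<rho> j = (if j \<in> E then \<beta> else \<alpha>)" for j
  have \<rho>pos: "\<rho> j > 0" for j using a1 b0 by (simp add: \<rho>_def)
  have prodA: "prod \<rho> A = \<beta> ^ card (A \<inter> E) * \<alpha> ^ card (A - E)" if "finite A" for A
  proof -
    have "prod \<rho> A = prod (\<lambda>_. \<beta>) (A \<inter> {x. x \<in> E}) * prod (\<lambda>_. \<alpha>) (A \<inter> - {x. x \<in> E})"
      unfolding \<rho>_def by (rule prod.If_cases[OF that])
    also have "\<dots> = \<beta> ^ card (A \<inter> E) * \<alpha> ^ card (A - E)"
      by (simp add: Diff_eq)
    finally show ?thesis .
  qed
  have prod_lb: "prod \<rho> A \<ge> hh (n - m) \<alpha>" if A: "A \<subseteq> {0..n+1}" "j \<in> A" "j \<notin> E" for A j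
  proof -
    have fA: "finite A" using A finite_subset by blast
    have "card (A \<inter> E) \<le> n - m" using cE card_mono[of E "A \<inter> E"] finite_subset[OF E_sub] by auto
    then have "\<beta> ^ (n - m) \<le> \<beta> ^ card (A \<inter> E)" using b0 b1 by (intro power_decreasing) auto
    moreover have "card (A - E) \<ge> 1" using A fA by (metis DiffI One_nat_def Suc_leI card_gt_0_iff empty_iff finite_Diff)
    then have "\<alpha> ^ 1 \<le> \<alpha> ^ card (A - E)" using a1 by (intro power_increasing) auto
    ultimately have "\<beta> ^ (n - m) * \<alpha> \<le> \<beta> ^ card (A \<inter> E) * \<alpha> ^ card (A - E)"
      using a1 b0 by (intro mult_mono) auto
    then show ?thesis using prodA[OF fA] bet_eq by (simp add: hh_def mult.commute)
  qed
  have prod_all: "prod \<rho> {0..n+1} = \<gamma>"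
  proof -
    have sub: "E \<subseteq> {0..n+1}" using E_sub by auto
    have "card ({0..n+1} \<inter> E) = n - m" using sub cE by (simp add: Int_absorb1)
    moreover have "card ({0..n+1} - E) = m + 2"
      using card_Diff_subset[OF finite_subset[OF sub] sub] cE mn by simp
    ultimately show ?thesis using prodA[of "{0..n+1}"] fa bet_eq by (simp add: f1_eq mult.commute)
  qed
  define rs where "rs i = (1 / \<gamma>) * prod \<rho> {..<nat (i + 1)}" for i
  have rs_step: "rs (int j) = \<rho> j * rs (int j - 1)" for j
  proof -
    have "nat (int j + 1) = Suc j" "nat (int j - 1 + 1) = j" by auto
    then show ?thesis unfolding rs_def by (simp add: prod.lessThan_Suc)
  qed
  have rs_m1: "rs (-1) = 1 / \<gamma>" by (simp add: rs_def)
  have rs_top: "rs (int n + 1) = 1"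
  proof -
    have "nat (int n + 1 + 1) = Suc (n + 1)" by auto
    moreover have "{..<Suc (n + 1)} = {0..n+1}" by auto
    ultimately show ?thesis using prod_all g1 by (simp add: rs_def)
  qed
  have rs_adm: "admissible \<gamma> n rs"
    unfolding admissible_def
  proof
    fix i assume i: "i \<in> {-1..int n + 1}"
    define K where "K = nat (i + 1)"
    have K: "K \<le> n + 2" using i by (auto simp: K_def)
    have pK: "prod \<rho> {..<K} > 0" using \<rho>pos by (simp add: prod_pos)
    have "prod \<rho> {..<K} \<ge> 1"
    proof (cases "K = 0")
      case True then show ?thesis by simp
    next
      case False
      then have "prod \<rho> {..<K} \<ge> hh (n - m) \<alpha>" using K
        by (intro prod_lb[of _ 0]) (auto simp: image_iff)
      then show ?thesis using hk by auto
    qed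
    moreover have "prod \<rho> {..<K} \<le> \<gamma>"
    proof -
      have un: "{..<K} \<union> {K..n+1} = {0..n+1}" using K by auto
      have "prod \<rho> {..<K} * prod \<rho> {K..n+1} = \<gamma>"
      proof -
        have "prod \<rho> ({..<K} \<union> {K..n+1}) = prod \<rho> {..<K} * prod \<rho> {K..n+1}"
          by (rule prod.union_disjoint) auto
        then show ?thesis using un prod_all by simp
      qed
      moreover have "prod \<rho> {K..n+1} \<ge> 1"
      proof (cases "K = n + 2")
        case True then show ?thesis by simp
      next
        case False
        then have "prod \<rho> {K..n+1} \<ge> hh (n - m) \<alpha>" using K
          by (intro prod_lb[of _ "n+1"]) (auto simp: I2_def)
        then show ?thesis using hk by auto
      qed
      ultimately show ?thesis using pK by (metis mult_le_cancel_left1 order_less_imp_not_less)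
    qed
    ultimately show "rs i \<in> {1 / \<gamma>..1}" using g1 unfolding rs_def K_def[symmetric]
      by (auto simp: field_simps)
  qed
  have pos: "r i > 0" if "admissible \<gamma> n r" "i \<in> {-1..int n + 1}" for r i
  proof -
    have "r i \<ge> 1 / \<gamma>" using that unfolding admissible_def by auto
    moreover have "1 / \<gamma> > 0" using g1 by auto
    ultimately show ?thesis by linarith
  qed
  define lam where "lam = 1 / (1 + \<alpha>)"
  have lam1: "1 - \<alpha> / (1 + \<alpha>) = lam" using a1 unfolding lam_def by (simp add: field_simps)
  have lam2: "1 / 2 - \<beta> / (1 + \<beta>) = lam"
  proof -
    have n3: "\<alpha> + 3 \<noteq> 0" "2 * \<alpha> + 2 \<noteq> 0" "1 + \<alpha> \<noteq> 0" using a1 by auto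
    have "\<beta> / (1 + \<beta>) = (\<alpha> - 1) / (2 * \<alpha> + 2)" unfolding \<beta>_def beta_of_def using a1
      by (simp add: divide_simps)
    then show ?thesis unfolding lam_def using a1 by (simp only:) (simp add: divide_simps)
  qed
  define D where "D r j = (Tm E j (r (int j - 1)) (r (int j)) - Tm E j (rs (int j - 1)) (rs (int j)))
      + lam * ((ln (r (int j)) - ln (r (int j - 1))) - ln (\<rho> j))" for r j
  have Dj: "D r j \<ge> 0 \<and> (D r j = 0 \<longrightarrow> r (int j) = \<rho> j * r (int j - 1))"
    if r: "admissible \<gamma> n r" and j: "j \<le> n + 1" for r j
  proof -
    have p: "r (int j - 1) > 0" and q: "r (int j) > 0" and p': "rs (int j - 1) > 0"
      using pos[OF r] pos[OF rs_adm] j by auto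
    show ?thesis
    proof (cases "j \<in> E")
      case True
      then have "\<rho> j = \<beta>" by (simp add: \<rho>_def)
      then have "D r j = (ln (r (int j - 1) + r (int j)) - ln 2 - (ln (r (int j - 1)) + ln (r (int j))) / 2) -
          (ln (rs (int j - 1) + \<beta> * rs (int j - 1)) - ln 2 - (ln (rs (int j - 1)) + ln (\<beta> * rs (int j - 1))) / 2)
        + (1/2 - \<beta> / (1 + \<beta>)) * ((ln (r (int j)) - ln (r (int j - 1))) - ln \<beta>)"
        unfolding D_def lam2 using True rs_step[of j] by (simp add: Tm_def)
      then show ?thesis using eq_tangent[OF b0 p q p'] \<open>\<rho> j = \<beta>\<close> by auto
    next
      case False
      then have "\<rho> j = \<alpha>" by (simp add: \<rho>_def)
      then have "D r j = (ln (r (int j - 1) + r (int j)) - ln (r (int j))) -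
          (ln (rs (int j - 1) + \<alpha> * rs (int j - 1)) - ln (\<alpha> * rs (int j - 1)))
        + (1 - \<alpha> / (1 + \<alpha>)) * ((ln (r (int j)) - ln (r (int j - 1))) - ln \<alpha>)"
        unfolding D_def lam1 using False rs_step[of j] by (simp add: Tm_def)
      moreover have "\<alpha> > 0" using a1 by auto
      ultimately show ?thesis using strict_tangent[OF _ p q p'] \<open>\<rho> j = \<alpha>\<close> by auto
    qed
  qed
  have sumln: "(\<Sum>j\<in>{0..n+1}. ln (\<rho> j)) = ln \<gamma>"
  proof -
    have "ln (prod \<rho> {0..n+1}) = (\<Sum>j\<in>{0..n+1}. ln (\<rho> j))"
      by (rule ln_prod) (use \<rho>pos in \<open>auto simp: less_imp_neq[symmetric]\<close>)
    then show ?thesis by (simp only: prod_all)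
  qed
  have main: "L_OPN n u r - L_OPN n u rs = sum (D r) {0..n+1} + lam * (ln \<gamma> - (ln (r (int n + 1)) - ln (r (-1))))"
    if r: "admissible \<gamma> n r" for r
  proof -
    have "sum (D r) {0..n+1} = (L_OPN n u r - L_OPN n u rs) + lam * ((ln (r (int n + 1)) - ln (r (-1))) - ln \<gamma>)"
      unfolding D_def sum_lin sumln telescope[of "\<lambda>i. ln (r i)"]
      using L_OPN_eq[of r, OF pos[OF r]] L_OPN_eq[of rs, OF pos[OF rs_adm]] by simp
    then show ?thesis by (simp add: algebra_simps)
  qed
  have Spos: "ln \<gamma> - (ln (r (int n + 1)) - ln (r (-1))) \<ge> 0"
    and Seq: "ln \<gamma> - (ln (r (int n + 1)) - ln (r (-1))) = 0 \<Longrightarrow> r (-1) = 1 / \<gamma>"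
    if r: "admissible \<gamma> n r" for r
  proof -
    have "r (int n + 1) \<le> 1" "r (-1) \<ge> 1 / \<gamma>" using r unfolding admissible_def by auto
    moreover have "r (int n + 1) > 0" "r (-1) > 0" using pos[OF r] by auto
    ultimately have l1: "ln (r (int n + 1)) \<le> 0" and l2': "ln (r (-1)) \<ge> ln (1 / \<gamma>)"
      using g1 by auto
    have l2: "ln (r (-1)) \<ge> - ln \<gamma>" using l2' g1 by (simp add: ln_div)
    show "ln \<gamma> - (ln (r (int n + 1)) - ln (r (-1))) \<ge> 0" using l1 l2 by linarith
    assume "ln \<gamma> - (ln (r (int n + 1)) - ln (r (-1))) = 0"
    then have "ln (r (-1)) = ln (1 / \<gamma>)" using l1 l2 g1 by (simp add: ln_div)
    then show "r (-1) = 1 / \<gamma>" using \<open>r (-1) > 0\<close> g1 by simp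
  qed
  have lam_pos: "lam > 0" using a1 unfolding lam_def by simp
  have Dsum: "sum (D r) {0..n+1} \<ge> 0" if "admissible \<gamma> n r" for r
    using Dj[OF that] by (intro sum_nonneg) auto
  have lower: "L_OPN n u rs \<le> L_OPN n u r" if "admissible \<gamma> n r" for r
  proof -
    have "lam * (ln \<gamma> - (ln (r (int n + 1)) - ln (r (-1)))) \<ge> 0"
      using Spos[OF that] lam_pos by simp
    then show ?thesis using main[OF that] Dsum[OF that] by linarith
  qed
  have minrs: "is_minimizer \<gamma> n u rs" unfolding is_minimizer_def using rs_adm lower by auto
  then show "\<exists>r. is_minimizer \<gamma> n u r \<and> r (-1) = 1 / \<gamma>" using rs_m1 by auto
  assume mr: "is_minimizer \<gamma> n u r"
  then have ra: "admissible \<gamma> n r" and le: "L_OPN n u r \<le> L_OPN n u rs"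
    using rs_adm unfolding is_minimizer_def by auto
  have z1: "sum (D r) {0..n+1} = 0" and z2: "lam * (ln \<gamma> - (ln (r (int n + 1)) - ln (r (-1)))) = 0"
  proof -
    have "lam * (ln \<gamma> - (ln (r (int n + 1)) - ln (r (-1)))) \<ge> 0"
      using Spos[OF ra] lam_pos by simp
    then show "sum (D r) {0..n+1} = 0" "lam * (ln \<gamma> - (ln (r (int n + 1)) - ln (r (-1)))) = 0"
      using main[OF ra] le Dsum[OF ra] by linarith+
  qed
  have rm1: "r (-1) = 1 / \<gamma>" using z2 lam_pos Seq[OF ra] by auto
  have step: "r (int j) = \<rho> j * r (int j - 1)" if "j \<le> n + 1" for j
  proof -
    have "\<forall>j\<in>{0..n+1}. D r j = 0"
      using z1 Dj[OF ra] by (subst sum_nonneg_eq_0_iff[symmetric]) auto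
    then show ?thesis using Dj[OF ra that] that by auto
  qed
  have "r 0 = \<alpha> / \<gamma>" using step[of 0] rm1 by (simp add: \<rho>_def)
  moreover have "r (int i + 1) = \<alpha> * r (int i)" if "i \<in> I1 n u" for i
  proof -
    have "i \<notin> I2 n u" "i < n" using that I12_disj by (auto simp: I1_def)
    then have "Suc i \<notin> E" by auto
    then show ?thesis using step[of "Suc i"] \<open>i < n\<close> by (simp add: \<rho>_def add.commute)
  qed
  moreover have "r (int i + 1) = \<beta> * r (int i)" if "i \<in> I2 n u" for i
  proof -
    have "i < n" using that by (auto simp: I2_def)
    then show ?thesis using step[of "Suc i"] that by (simp add: \<rho>_def add.commute)
  qed
  ultimately show "r (-1) = 1 / \<gamma>
          \<and> r 0 = alpha_gamma n (card (I1 n u)) \<gamma> / \<gamma>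
          \<and> (\<forall>i\<in>I1 n u. r (int i + 1) = alpha_gamma n (card (I1 n u)) \<gamma> * r (int i))
          \<and> (\<forall>i\<in>I2 n u. r (int i + 1) = beta_of (alpha_gamma n (card (I1 n u)) \<gamma>) * r (int i))"
    using rm1 unfolding \<alpha>_def \<beta>_def m_def by auto
qed

end



lemma Lmin_eq: "is_minimizer \<gamma> n u r \<Longrightarrow> Lmin \<gamma> n u = L_OPN n u r"
  unfolding Lmin_def is_minimizer_def by (intro cInf_eq_minimum) auto

theorem proposition5:
  fixes n :: nat and u :: "nat \<Rightarrow> real"
  assumes mono_u: "\<And>i j. i < j \<Longrightarrow> j \<le> n \<Longrightarrow> u i \<le> u j"
  defines "m \<equiv> card (I1 n u)"
  shows "strict_mono_on {1..} (f1 n m) \<and> filterlim (f1 n m) at_top at_top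
    \<and> strict_mono_on {1..} (\<lambda>\<gamma>. f1 n m (\<gamma> powr (1 / real (m + 1))) / \<gamma>)
    \<and> filterlim (\<lambda>\<gamma>. f1 n m (\<gamma> powr (1 / real (m + 1))) / \<gamma>) at_top at_top
    \<and> (\<exists>!\<gamma>0. \<gamma>0 \<ge> 1 \<and> f1 n m (\<gamma>0 powr (1 / real (m + 1))) = \<gamma>0)
    \<and> (\<forall>\<gamma>0. \<gamma>0 \<ge> 1 \<and> f1 n m (\<gamma>0 powr (1 / real (m + 1))) = \<gamma>0 \<longrightarrow>
         (\<forall>\<gamma>>\<gamma>0. (\<exists>!\<alpha>. \<alpha> > 1 \<and> f1 n m \<alpha> = \<gamma>)
            \<and> (\<exists>r. is_minimizer \<gamma> n u r)
            \<and> (\<forall>r. is_minimizer \<gamma> n u r \<longrightarrow>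
                 r 0 = alpha_gamma n m \<gamma> / \<gamma>
               \<and> (\<forall>i\<in>I1 n u. r (int i + 1) = alpha_gamma n m \<gamma> * r (int i))
               \<and> (\<forall>i\<in>I2 n u. r (int i + 1) = beta_of (alpha_gamma n m \<gamma>) * r (int i))))
       \<and> strict_antimono_on {\<gamma>0<..} (\<lambda>\<gamma>. Lmin \<gamma> n u))
    \<and> filterlim (alpha_gamma n m) at_top at_top
    \<and> ((\<lambda>\<gamma>. beta_of (alpha_gamma n m \<gamma>)) \<longlongrightarrow> 1) at_top"
proof -
  interpret setting n u using mono_u by unfold_locales
  have part6: "(\<forall>\<gamma>>\<gamma>0. (\<exists>!\<alpha>. \<alpha> > 1 \<and> f1 n m \<alpha> = \<gamma>)
            \<and> (\<exists>r. is_minimizer \<gamma> n u r)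
            \<and> (\<forall>r. is_minimizer \<gamma> n u r \<longrightarrow>
                 r 0 = alpha_gamma n m \<gamma> / \<gamma>
               \<and> (\<forall>i\<in>I1 n u. r (int i + 1) = alpha_gamma n m \<gamma> * r (int i))
               \<and> (\<forall>i\<in>I2 n u. r (int i + 1) = beta_of (alpha_gamma n m \<gamma>) * r (int i))))
       \<and> strict_antimono_on {\<gamma>0<..} (\<lambda>\<gamma>. Lmin \<gamma> n u)"
    if g0: "\<gamma>0 \<ge> 1" "f1 n m (\<gamma>0 powr (1 / real (m + 1))) = \<gamma>0" for \<gamma>0
  proof
    have g0': "\<gamma>0 \<ge> 1" "f1 n (card (I1 n u)) (\<gamma>0 powr (1 / real (card (I1 n u) + 1))) = \<gamma>0"
      using g0 unfolding m_def by auto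
    show "\<forall>\<gamma>>\<gamma>0. (\<exists>!\<alpha>. \<alpha> > 1 \<and> f1 n m \<alpha> = \<gamma>)
            \<and> (\<exists>r. is_minimizer \<gamma> n u r)
            \<and> (\<forall>r. is_minimizer \<gamma> n u r \<longrightarrow>
                 r 0 = alpha_gamma n m \<gamma> / \<gamma>
               \<and> (\<forall>i\<in>I1 n u. r (int i + 1) = alpha_gamma n m \<gamma> * r (int i))
               \<and> (\<forall>i\<in>I2 n u. r (int i + 1) = beta_of (alpha_gamma n m \<gamma>) * r (int i)))"
    proof (intro allI impI)
      fix \<gamma> assume g: "\<gamma> > \<gamma>0"
      have A: "\<exists>!\<alpha>. \<alpha> > 1 \<and> f1 n m \<alpha> = \<gamma>" using g g0 by (intro alpha_exists) auto
      have B: "\<exists>r. is_minimizer \<gamma> n u r" using opt(1)[OF g0' g] by auto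
      have C: "\<forall>r. is_minimizer \<gamma> n u r \<longrightarrow>
                 r 0 = alpha_gamma n m \<gamma> / \<gamma>
               \<and> (\<forall>i\<in>I1 n u. r (int i + 1) = alpha_gamma n m \<gamma> * r (int i))
               \<and> (\<forall>i\<in>I2 n u. r (int i + 1) = beta_of (alpha_gamma n m \<gamma>) * r (int i))"
        using opt(2)[OF g0' g] unfolding m_def by blast
      show "(\<exists>!\<alpha>. \<alpha> > 1 \<and> f1 n m \<alpha> = \<gamma>)
            \<and> (\<exists>r. is_minimizer \<gamma> n u r)
            \<and> (\<forall>r. is_minimizer \<gamma> n u r \<longrightarrow>
                 r 0 = alpha_gamma n m \<gamma> / \<gamma>
               \<and> (\<forall>i\<in>I1 n u. r (int i + 1) = alpha_gamma n m \<gamma> * r (int i))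
               \<and> (\<forall>i\<in>I2 n u. r (int i + 1) = beta_of (alpha_gamma n m \<gamma>) * r (int i)))"
        using A B C by blast
    qed
    show "strict_antimono_on {\<gamma>0<..} (\<lambda>\<gamma>. Lmin \<gamma> n u)"
    proof (rule monotone_onI)
      fix \<gamma> \<gamma>' assume gg: "\<gamma> \<in> {\<gamma>0<..}" "\<gamma>' \<in> {\<gamma>0<..}" "\<gamma> < \<gamma>'"
      then have g: "\<gamma>0 < \<gamma>" and g': "\<gamma>0 < \<gamma>'" by auto
      obtain r where r: "is_minimizer \<gamma> n u r" "r (-1) = 1 / \<gamma>" using opt(1)[OF g0' g] by auto
      obtain r' where r': "is_minimizer \<gamma>' n u r'" using opt(1)[OF g0' g'] by auto
      have "1 / \<gamma>' < 1 / \<gamma>" using gg g0 by (simp add: frac_less2)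
      then have adm: "admissible \<gamma>' n r" using r(1) unfolding is_minimizer_def admissible_def
        by force
      have le: "L_OPN n u r' \<le> L_OPN n u r" using r' adm unfolding is_minimizer_def by auto
      have "L_OPN n u r' < L_OPN n u r"
      proof (rule ccontr)
        assume "\<not> ?thesis"
        then have "L_OPN n u r \<le> L_OPN n u r'" by auto
        then have "is_minimizer \<gamma>' n u r" using adm r' unfolding is_minimizer_def by force
        then have "r (-1) = 1 / \<gamma>'" using opt(2)[OF g0' g'] by blast
        then show False using r(2) \<open>1 / \<gamma>' < 1 / \<gamma>\<close> by auto
      qed
      then show "Lmin \<gamma>' n u < Lmin \<gamma> n u" using Lmin_eq[OF r(1)] Lmin_eq[OF r'] by simp
    qed
  qed
  show ?thesis
    using f1_strict_mono[of n m] f1_at_top[of n m] G_strict_mono[of n m] G_at_top[of n m]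
      gamma0_exists[of n m] part6 alpha_at_top[of n m] beta_lim[of n m] by blast
qed

end
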